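(* Consider the discrete-time linear control system on $\mathrm{Aff}(2,\mathbb{R})$ given by $(x_{k+1},y_{k+1})=f_{u_k}(x_k,y_k)$, $u_k\in U$, where $f_u(x,y)=(h(u)x,\ a(x-1)+dy+g(u)x)$ with $a\in\mathbb{R}$, $d\in\mathbb{R}\setminus\{0\}$, and $h:\mathbb{R}^m\to(0,\infty)$, $g:\mathbb{R}^m\to\mathbb{R}$ smooth with $h(0)=1$, $g(0)=0$, and $U\subset\mathbb{R}^m$ a compact convex neighborhood of $0$. If $h'(0)\neq0$, $-a\,h'(0)\neq g'(0)(d-1)$ and $d=1$, then the system is controllable.
   Context: $\mathrm{Aff}(2,\mathbb{R})$ is the set $(0,\infty)\times\mathbb{R}$ with product $(x_1,y_1)\cdot(x_2,y_2)=(x_1x_2,\ y_2+x_2y_1)$ and identity $(1,0)$. Controls are sequences $u=(u_i)_{i\in\mathbb{N}_0}\in U^{\mathbb{N}_0}$ and the solution is $\varphi(0,p,u)=p$, $\varphi(k,p,u)=f_{u_{k-1}}\circ\cdots\circ f_{u_0}(p)$. $h'(0)$ and $g'(0)$ denote the derivatives of $h$ and $g$ at $0$. The system is controllable if for all $p,q$ there are $k\in\mathbb{N}$ and a control $u$ with $\varphi(k,p,u)=q$. *)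

theory Defs
  imports "HOL-Analysis.Analysis"
begin

fun C_k_on :: "nat \<Rightarrow> ('a::euclidean_space \<Rightarrow> real) \<Rightarrow> 'a set \<Rightarrow> bool" where
  "C_k_on 0 f S = continuous_on S f"
| "C_k_on (Suc n) f S =
     (\<exists>f'. (\<forall>x\<in>S. (f has_derivative f' x) (at x)) \<and> (\<forall>v. C_k_on n (\<lambda>x. f' x v) S))"

definition smooth_on :: "('a::euclidean_space \<Rightarrow> real) \<Rightarrow> 'a set \<Rightarrow> bool" where
  "smooth_on f S \<longleftrightarrow> (\<forall>n. C_k_on n f S)"

text \<open>Aff(2,R) realised as pairs (x,y) with x > 0.\<close>
definition Aff2 :: "(real \<times> real) set" where
  "Aff2 = {p. fst p > 0}"

definition sys_map ::
  "('u \<Rightarrow> real) \<Rightarrow> ('u \<Rightarrow> real) \<Rightarrow> real \<Rightarrow> real \<Rightarrow> 'u \<Rightarrow> real \<times> real \<Rightarrow> real \<times> real" where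
  "sys_map h g a d u p = (h u * fst p, a * (fst p - 1) + d * snd p + g u * fst p)"

fun sys_phi ::
  "('u \<Rightarrow> real) \<Rightarrow> ('u \<Rightarrow> real) \<Rightarrow> real \<Rightarrow> real \<Rightarrow> nat \<Rightarrow> real \<times> real \<Rightarrow> (nat \<Rightarrow> 'u) \<Rightarrow> real \<times> real" where
  "sys_phi h g a d 0 p u = p"
| "sys_phi h g a d (Suc k) p u = sys_map h g a d (u k) (sys_phi h g a d k p u)"

definition sys_controllable ::
  "('u \<Rightarrow> real) \<Rightarrow> ('u \<Rightarrow> real) \<Rightarrow> real \<Rightarrow> real \<Rightarrow> 'u set \<Rightarrow> bool" where
  "sys_controllable h g a d U \<longleftrightarrow>
     (\<forall>p\<in>Aff2. \<forall>q\<in>Aff2. \<exists>k::nat. k \<ge> 1 \<and>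
        (\<exists>u::nat \<Rightarrow> 'u. (\<forall>i. u i \<in> U) \<and> sys_phi h g a d k p u = q))"

end

theory Submission
  imports Defs
begin

lemma phi_split:
  "sys_phi h g a d (k1 + k2) p u = sys_phi h g a d k2 (sys_phi h g a d k1 p u) (\<lambda>i. u (i + k1))"
  by (induction k2) (simp_all add: add.commute)

lemma phi_cong:
  "(\<And>i. i < k \<Longrightarrow> u i = u' i) \<Longrightarrow> sys_phi h g a d k p u = sys_phi h g a d k p u'"
  by (induction k) auto

lemma phi_zero:
  assumes "h 0 = 1" "g 0 = 0"
  shows "sys_phi h g a 1 m p (\<lambda>_. 0) = (fst p, snd p + real m * a * (fst p - 1))"
  using assms by (induction m) (simp_all add: sys_map_def algebra_simps)

lemma phi_shift:
  "sys_phi h g a 1 k (x, y + c) u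
     = (fst (sys_phi h g a 1 k (x, y) u), snd (sys_phi h g a 1 k (x, y) u) + c)"
  by (induction k) (simp_all add: sys_map_def algebra_simps)

lemma phi_fst_const:
  "fst (sys_phi h g a d k p (\<lambda>_. w)) = fst p * h w ^ k"
  by (induction k) (simp_all add: sys_map_def algebra_simps)

lemma phi_cont:
  fixes h g :: "'u::topological_space \<Rightarrow> real" and S :: "'s::topological_space set"
  assumes hc: "continuous_on UNIV h" and gc: "continuous_on UNIV g"
    and Pc: "continuous_on S P" and uc: "\<And>i. continuous_on S (\<lambda>X. u X i)"
  shows "continuous_on S (\<lambda>X. sys_phi h g a d k (P X) (u X))"
proof (induction k)
  case 0
  then show ?case using Pc by simp
next
  case (Suc k)
  have hu: "continuous_on S (\<lambda>X. h (u X k))"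
    by (rule continuous_on_compose2[OF hc uc]) auto
  have gu: "continuous_on S (\<lambda>X. g (u X k))"
    by (rule continuous_on_compose2[OF gc uc]) auto
  show ?case unfolding sys_phi.simps sys_map_def
    by (intro continuous_intros hu gu Suc)
qed

lemma inverse_control:
  fixes h :: "real^'m \<Rightarrow> real" and U :: "(real^'m) set"
  assumes sm: "smooth_on h UNIV" and h0: "h 0 = 1" and dh: "(h has_derivative Dh) (at 0)"
    and nz: "Dh \<noteq> (\<lambda>v. 0)" and U: "0 \<in> interior U" and hpos: "\<forall>v. h v > 0"
  shows "\<exists>\<gamma>>1. \<exists>R. continuous_on {1/\<gamma>..\<gamma>} R \<and> (\<forall>c\<in>{1/\<gamma>..\<gamma>}. R c \<in> U \<and> h (R c) = c)"
proof -
  have "C_k_on (Suc 0) h UNIV" using sm unfolding smooth_on_def by blast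
  then obtain f' where f'd: "\<And>x. (h has_derivative f' x) (at x)"
    and f'c: "\<And>w. continuous_on UNIV (\<lambda>x. f' x w)" by auto
  have f'0: "f' 0 = Dh" using has_derivative_unique[OF f'd dh] .
  have lin: "linear Dh" using dh has_derivative_linear by blast
  obtain w where w: "Dh w \<noteq> 0" using nz by auto
  obtain v where v: "Dh v > 0"
  proof (cases "Dh w > 0")
    case True then show ?thesis using that by blast
  next
    case False
    then have "Dh (- w) > 0" using w linear_neg[OF lin, of w] by simp
    then show ?thesis using that by blast
  qed
  have vnz: "v \<noteq> 0" using v linear_0[OF lin] by auto
  have "continuous (at 0) (\<lambda>x. f' x v)"
    using f'c continuous_on_eq_continuous_at open_UNIV by blast
  then obtain \<delta> where d0: "\<delta> > 0" and dd: "\<And>x. dist x 0 < \<delta> \<Longrightarrow> dist (f' x v) (f' 0 v) < Dh v"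
    unfolding continuous_at_eps_delta using v by blast
  have fpos: "f' x v > 0" if "norm x < \<delta>" for x
    using dd[of x] that f'0 by (auto simp: dist_norm)
  obtain e where e0: "e > 0" and eU: "ball 0 e \<subseteq> U" using U mem_interior by blast
  define \<epsilon> where "\<epsilon> = min \<delta> e / (2 * norm v)"
  have nv: "norm v > 0" using vnz by simp
  have eps0: "\<epsilon> > 0" unfolding \<epsilon>_def using d0 e0 nv by simp
  have small: "norm (t *\<^sub>R v) < \<delta> \<and> norm (t *\<^sub>R v) < e" if "\<bar>t\<bar> \<le> \<epsilon>" for t
  proof -
    have "norm (t *\<^sub>R v) = \<bar>t\<bar> * norm v" by simp
    also have "\<dots> \<le> \<epsilon> * norm v" using that nv by (simp add: mult_right_mono)
    also have "\<dots> = min \<delta> e / 2" unfolding \<epsilon>_def using nv by simp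
    finally show ?thesis using d0 e0 by linarith
  qed
  define q where "q t = h (t *\<^sub>R v)" for t
  have qd: "(q has_real_derivative f' (t *\<^sub>R v) v) (at t)" for t
  proof -
    have l: "((\<lambda>t. t *\<^sub>R v) has_derivative (\<lambda>s. s *\<^sub>R v)) (at t)"
      by (intro derivative_eq_intros) auto
    have "((\<lambda>t. h (t *\<^sub>R v)) has_derivative (\<lambda>s. f' (t *\<^sub>R v) (s *\<^sub>R v))) (at t)"
      using has_derivative_compose[OF l f'd] .
    moreover have "(\<lambda>s. f' (t *\<^sub>R v) (s *\<^sub>R v)) = (*) (f' (t *\<^sub>R v) v)"
      using linear_scale[OF has_derivative_linear[OF f'd[of "t *\<^sub>R v"]]]
      by (auto simp: mult.commute)
    ultimately show ?thesis unfolding has_field_derivative_def q_def by simp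
  qed
  have qmono: "q s < q t" if "-\<epsilon> \<le> s" "s < t" "t \<le> \<epsilon>" for s t
  proof (rule DERIV_pos_imp_increasing[OF that(2)])
    fix x assume "s \<le> x" "x \<le> t"
    then have "\<bar>x\<bar> \<le> \<epsilon>" using that by linarith
    then show "\<exists>y. DERIV q x :> y \<and> y > 0" using qd fpos small by blast
  qed
  have hc: "continuous_on UNIV h"
    using f'd has_derivative_continuous continuous_at_imp_continuous_on by blast
  have qc: "continuous_on {-\<epsilon>..\<epsilon>} q" unfolding q_def
    by (rule continuous_on_compose2[OF hc]) (auto intro!: continuous_intros)
  define r where "r = inv_into {-\<epsilon>..\<epsilon>} q"
  have inj: "inj_on q {-\<epsilon>..\<epsilon>}"
  proof (rule inj_onI)
    fix s t assume "s \<in> {-\<epsilon>..\<epsilon>}" "t \<in> {-\<epsilon>..\<epsilon>}" "q s = q t"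
    then show "s = t" using qmono[of s t] qmono[of t s] by (cases s t rule: linorder_cases) auto
  qed
  have rc: "continuous_on (q ` {-\<epsilon>..\<epsilon>}) r"
    by (rule continuous_on_inv[OF qc compact_Icc]) (simp add: r_def inv_into_f_f[OF inj])
  have q0: "q 0 = 1" using h0 by (simp add: q_def)
  have qlo: "q (-\<epsilon>) < 1" using qmono[of "-\<epsilon>" 0] eps0 q0 by simp
  have qhi: "q \<epsilon> > 1" using qmono[of 0 \<epsilon>] eps0 q0 by simp
  have qlopos: "q (-\<epsilon>) > 0" using hpos by (simp add: q_def)
  define \<gamma> where "\<gamma> = min (q \<epsilon>) (1 / q (-\<epsilon>))"
  have g1: "\<gamma> > 1" unfolding \<gamma>_def using qhi qlo qlopos by simp
  have sub: "{1/\<gamma>..\<gamma>} \<subseteq> q ` {-\<epsilon>..\<epsilon>}"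
  proof
    fix c assume c: "c \<in> {1/\<gamma>..\<gamma>}"
    have "\<gamma> \<le> q \<epsilon>" unfolding \<gamma>_def by simp
    have "\<gamma> \<le> 1 / q (-\<epsilon>)" unfolding \<gamma>_def by simp
    then have "q (-\<epsilon>) \<le> 1 / \<gamma>" using g1 qlopos by (simp add: field_simps)
    then have "q (-\<epsilon>) \<le> c" "c \<le> q \<epsilon>" using c \<open>\<gamma> \<le> q \<epsilon>\<close> by auto
    then obtain t where "-\<epsilon> \<le> t" "t \<le> \<epsilon>" "q t = c"
      using IVT'[of q "-\<epsilon>" c \<epsilon>] qc eps0 by auto
    then show "c \<in> q ` {-\<epsilon>..\<epsilon>}" by auto
  qed
  define R where "R c = r c *\<^sub>R v" for c
  have "continuous_on {1/\<gamma>..\<gamma>} R" unfolding R_def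
    by (intro continuous_intros continuous_on_subset[OF rc sub])
  moreover have "R c \<in> U \<and> h (R c) = c" if "c \<in> {1/\<gamma>..\<gamma>}" for c
  proof -
    have ci: "c \<in> q ` {-\<epsilon>..\<epsilon>}" using sub that by blast
    have "r c \<in> {-\<epsilon>..\<epsilon>}" unfolding r_def using inv_into_into[OF ci] .
    then have "\<bar>r c\<bar> \<le> \<epsilon>" by auto
    then have "R c \<in> ball 0 e" using small unfolding R_def by auto
    moreover have "h (R c) = c" using f_inv_into_f[OF ci] unfolding R_def r_def q_def by simp
    ultimately show ?thesis using eU by blast
  qed
  ultimately show ?thesis using g1 by blast
qed

lemma root_in:
  fixes L \<gamma> \<rho> :: real and n :: nat
  assumes "\<gamma> > 1" "L > 0" "ln L < real n * ln \<gamma>" "n > 0" "1/L \<le> \<rho>" "\<rho> \<le> L"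
  shows "\<rho> powr (1 / real n) \<in> {1/\<gamma>..\<gamma>}"
proof -
  have rp: "\<rho> > 0" using assms by (meson less_le_trans zero_less_divide_1_iff)
  have "ln \<rho> \<le> ln L" using assms rp by simp
  moreover have "ln (1/L) \<le> ln \<rho>" using assms rp by (subst ln_le_cancel_iff) auto
  then have "- ln L \<le> ln \<rho>" using assms by (simp add: ln_div)
  ultimately have b: "\<bar>ln \<rho>\<bar> < real n * ln \<gamma>" using assms by linarith
  have np: "real n > 0" using assms by simp
  have b2: "\<bar>ln \<rho> / real n\<bar> < ln \<gamma>" using b np by (simp add: field_simps)
  have eq: "\<rho> powr (1 / real n) = exp (ln \<rho> / real n)" using rp by (simp add: powr_def)
  have b3: "ln \<rho> / real n < ln \<gamma>" "- ln \<gamma> < ln \<rho> / real n"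
    using b2 unfolding abs_less_iff by linarith+
  have "exp (ln \<rho> / real n) \<le> exp (ln \<gamma>)" using b3 by simp
  then have u: "exp (ln \<rho> / real n) \<le> \<gamma>" using assms by simp
  have "exp (- ln \<gamma>) \<le> exp (ln \<rho> / real n)" using b3 by simp
  then have l: "1/\<gamma> \<le> exp (ln \<rho> / real n)" using assms by (simp add: exp_minus inverse_eq_divide)
  show ?thesis using eq u l by simp
qed

lemma root_pow:
  fixes \<rho> :: real assumes "\<rho> > 0" "n > 0"
  shows "(\<rho> powr (1 / real n)) ^ n = \<rho>"
proof -
  have "(\<rho> powr (1 / real n)) ^ n = (\<rho> powr (1 / real n)) powr (real n)"
    using assms by (simp add: powr_realpow)
  also have "\<dots> = \<rho>" using assms by (simp add: powr_powr)
  finally show ?thesis .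
qed

lemma straddle:
  fixes T1 T2 B M Z1 Z2 c y :: real
  assumes "T1 \<le> B" "- T2 \<le> B" "M / 2 \<le> Z1" "M / 2 \<le> Z2" "2 * (B + c) < M" "y \<le> c" "- y \<le> c"
  shows "T1 + - Z1 \<le> y" "y \<le> T2 + Z2"
  using assms by (simp_all add: field_simps)
lemma half_le:
  fixes T B M Z c :: real
  assumes "\<bar>T\<bar> \<le> B" "2 * (B + \<bar>c\<bar>) < M" "M \<le> Z"
  shows "M / 2 \<le> Z"
proof -
  have "0 \<le> B" using assms(1) abs_ge_zero[of T] by (rule order_trans[rotated])
  then have "0 < M" using assms(2) abs_ge_zero[of c] by (smt (verit))
  then show ?thesis using assms(3) by simp
qed

theorem theorem3p9:
  fixes h g :: "real^'m \<Rightarrow> real" and Dh Dg :: "real^'m \<Rightarrow> real"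
    and a d :: real and U :: "(real^'m) set"
  assumes "d \<noteq> 0"
    and "\<forall>v. h v > 0"
    and "smooth_on h UNIV" and "smooth_on g UNIV"
    and "h 0 = 1" and "g 0 = 0"
    and "compact U" and "convex U" and "0 \<in> interior U"
    and "(h has_derivative Dh) (at 0)" and "(g has_derivative Dg) (at 0)"
    and "Dh \<noteq> (\<lambda>v. 0)"
    and "(\<lambda>v. - a * Dh v) \<noteq> (\<lambda>v. Dg v * (d - 1))"
    and "d = 1"
  shows "sys_controllable h g a d U"
proof -
  have d1: "d = 1" by fact
  have a0: "a \<noteq> 0"
  proof
    assume "a = 0" then show False using assms(13) d1 by simp
  qed
  obtain \<gamma> R where g1: "\<gamma> > 1" and Rc: "continuous_on {1/\<gamma>..\<gamma>} R"
    and RU: "\<And>c. c \<in> {1/\<gamma>..\<gamma>} \<Longrightarrow> R c \<in> U" and hR: "\<And>c. c \<in> {1/\<gamma>..\<gamma>} \<Longrightarrow> h (R c) = c"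
    using inverse_control[OF assms(3,5,10,12,9,2)] by blast
  have hc: "continuous_on UNIV h" using assms(3) unfolding smooth_on_def
    using C_k_on.simps(1) by blast
  have gc: "continuous_on UNIV g" using assms(4) unfolding smooth_on_def
    using C_k_on.simps(1) by blast
  have U0: "0 \<in> U" using assms(9) interior_subset by blast
  show ?thesis unfolding sys_controllable_def
  proof (intro ballI)
    fix p q assume "p \<in> Aff2" "q \<in> Aff2"
    then obtain x0 y0 x1 y1 where p: "p = (x0, y0)" and q: "q = (x1, y1)" and x0: "x0 > 0" and x1: "x1 > 0"
      unfolding Aff2_def by (cases p, cases q) auto
    define Xlo where "Xlo = min (min x0 x1) 1 / 2"
    define Xhi where "Xhi = 2 * max (max x0 x1) 1"
    define L where "L = Xhi / Xlo"
    have Xlo0: "Xlo > 0" "Xlo \<le> 1/2" "Xlo \<le> x0" "Xlo \<le> x1" unfolding Xlo_def using x0 x1 by auto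
    have Xhi: "Xhi \<ge> 2" "x0 \<le> Xhi" "x1 \<le> Xhi" unfolding Xhi_def using x0 x1 by auto
    have L0: "L > 0" unfolding L_def using Xlo0 Xhi by simp
    have lng: "ln \<gamma> > 0" using g1 by simp
    obtain n0 :: nat where "ln L / ln \<gamma> < real n0" using reals_Archimedean2 by blast
    define n where "n = Suc n0"
    have n0: "n > 0" unfolding n_def by simp
    have nL: "ln L < real n * ln \<gamma>"
    proof -
      have "ln L < real n0 * ln \<gamma>" using \<open>ln L / ln \<gamma> < real n0\<close> lng by (simp add: field_simps)
      also have "\<dots> \<le> real n * ln \<gamma>" unfolding n_def using lng by (simp add: mult_right_mono)
      finally show ?thesis .
    qed
    have ratio: "1/L \<le> A / B \<and> A / B \<le> L" if "A \<in> {Xlo..Xhi}" "B \<in> {Xlo..Xhi}" for A B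
    proof -
      have "B * Xlo \<le> Xhi * A" using that Xlo0 Xhi by (intro mult_mono) auto
      moreover have "A * Xlo \<le> Xhi * B" using that Xlo0 Xhi by (intro mult_mono) auto
      moreover have "Xlo \<le> B" using that by auto
      ultimately show ?thesis unfolding L_def using Xlo0 Xhi that
        by (auto simp: field_simps)
    qed
    define W1 where "W1 X = R ((X / x0) powr (1 / real n))" for X
    define W3 where "W3 X = R ((x1 / X) powr (1 / real n))" for X
    have in1: "(X / x0) powr (1 / real n) \<in> {1/\<gamma>..\<gamma>}" if "X \<in> {Xlo..Xhi}" for X
      using root_in[OF g1 L0 nL n0] ratio[of X x0] that Xlo0 Xhi by auto
    have in3: "(x1 / X) powr (1 / real n) \<in> {1/\<gamma>..\<gamma>}" if "X \<in> {Xlo..Xhi}" for X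
      using root_in[OF g1 L0 nL n0] ratio[of x1 X] that Xlo0 Xhi by auto
    have W1U: "W1 X \<in> U" and hW1: "h (W1 X) ^ n = X / x0" if "X \<in> {Xlo..Xhi}" for X
      using RU[OF in1[OF that]] hR[OF in1[OF that]] root_pow[of "X / x0" n] that Xlo0 x0 n0
      unfolding W1_def by auto
    have W3U: "W3 X \<in> U" and hW3: "h (W3 X) ^ n = x1 / X" if "X \<in> {Xlo..Xhi}" for X
      using RU[OF in3[OF that]] hR[OF in3[OF that]] root_pow[of "x1 / X" n] that Xlo0 x1 n0
      unfolding W3_def by auto
    have W1c: "continuous_on {Xlo..Xhi} W1" unfolding W1_def
      by (rule continuous_on_compose2[OF Rc]) (use in1 x0 Xlo0 in \<open>auto intro!: continuous_intros\<close>)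
    have W3c: "continuous_on {Xlo..Xhi} W3" unfolding W3_def
      by (rule continuous_on_compose2[OF Rc]) (use in3 x1 Xlo0 in \<open>auto intro!: continuous_intros\<close>)
    define P1 where "P1 X = sys_phi h g a d n (x0, y0) (\<lambda>_. W1 X)" for X
    define T where "T X = snd (sys_phi h g a d n (P1 X) (\<lambda>_. W3 X))" for X
    have P1c: "continuous_on {Xlo..Xhi} P1" unfolding P1_def
      by (rule phi_cont[OF hc gc]) (auto intro: W1c)
    have Tc: "continuous_on {Xlo..Xhi} T" unfolding T_def
      by (intro continuous_intros phi_cont[OF hc gc] P1c W3c)
    have fP1: "fst (P1 X) = X" if "X \<in> {Xlo..Xhi}" for X
      unfolding P1_def phi_fst_const using hW1[OF that] x0 by simp
    obtain B where B: "\<And>X. X \<in> {Xlo..Xhi} \<Longrightarrow> \<bar>T X\<bar> \<le> B"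
      using compact_imp_bounded[OF compact_continuous_image[OF Tc compact_Icc]]
      unfolding bounded_iff by (metis atLeastAtMost_iff image_eqI real_norm_def)
    obtain m :: nat where m: "2 * (B + \<bar>y1\<bar>) / \<bar>a\<bar> < real m" using reals_Archimedean2 by blast
    have ma: "real m * \<bar>a\<bar> > 2 * (B + \<bar>y1\<bar>)" using m a0 by (simp add: field_simps)
    define Y where "Y X = T X + real m * a * (X - 1)" for X
    have Yc: "continuous_on {Xlo..Xhi} Y" unfolding Y_def by (intro continuous_intros Tc)
    have XX: "Xlo \<le> Xhi" using Xlo0 Xhi by linarith
    have lo: "\<bar>T Xlo\<bar> \<le> B" and hi: "\<bar>T Xhi\<bar> \<le> B" using B XX by auto
    have m1: "real m * \<bar>a\<bar> * (Xhi - 1) \<ge> real m * \<bar>a\<bar>"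
      using Xhi mult_left_mono[of 1 "Xhi - 1" "real m * \<bar>a\<bar>"] by simp
    have m2: "real m * \<bar>a\<bar> * (1 - Xlo) \<ge> real m * \<bar>a\<bar> / 2"
      using Xlo0 mult_left_mono[of "1/2" "1 - Xlo" "real m * \<bar>a\<bar>"] by simp
    obtain X where X: "X \<in> {Xlo..Xhi}" and YX: "Y X = y1"
    proof (cases "a > 0")
      case True
      have t2: "real m * a / 2 \<le> real m * a * (1 - Xlo)" using m2 abs_of_pos[OF True] by simp
      have t3: "2 * (B + \<bar>y1\<bar>) < real m * a" using ma abs_of_pos[OF True] by simp
      have m1': "real m * a \<le> real m * a * (Xhi - 1)" using m1 abs_of_pos[OF True] by simp
      have t1: "real m * a / 2 \<le> real m * a * (Xhi - 1)" by (rule half_le[OF lo t3 m1'])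
      have t4: "Y Xlo = T Xlo + - (real m * a * (1 - Xlo))" unfolding Y_def by (simp add: algebra_simps)
      have t5: "Y Xhi = T Xhi + real m * a * (Xhi - 1)" unfolding Y_def by simp
      have "Y Xlo \<le> y1" "y1 \<le> Y Xhi" unfolding t4 t5
        by (rule straddle[OF abs_le_D1[OF lo] abs_le_D2[OF hi] t2 t1 t3 abs_ge_self abs_ge_minus_self])+
      then show ?thesis using IVT'[OF _ _ XX Yc] that by auto
    next
      case False
      then have an: "\<bar>a\<bar> = - a" by simp
      have t2: "real m * (- a) / 2 \<le> real m * (- a) * (1 - Xlo)" using m2 an by simp
      have t3: "2 * (B + \<bar>y1\<bar>) < real m * (- a)" using ma an by simp
      have m1': "real m * (- a) \<le> real m * (- a) * (Xhi - 1)" using m1 an by simp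
      have t1: "real m * (- a) / 2 \<le> real m * (- a) * (Xhi - 1)" by (rule half_le[OF lo t3 m1'])
      have t4: "Y Xlo = T Xlo + real m * (- a) * (1 - Xlo)" unfolding Y_def by (simp add: algebra_simps)
      have t5: "Y Xhi = T Xhi + - (real m * (- a) * (Xhi - 1))" unfolding Y_def by (simp add: algebra_simps)
      have "Y Xhi \<le> y1" "y1 \<le> Y Xlo" unfolding t4 t5
        by (rule straddle[OF abs_le_D1[OF hi] abs_le_D2[OF lo] t1 t2 t3 abs_ge_self abs_ge_minus_self])+
      then show ?thesis using IVT2'[OF _ _ XX Yc] that by auto
    qed
    define u where "u i = (if i < n then W1 X else if i < n + m then 0 else W3 X)" for i
    have uU: "\<forall>i. u i \<in> U" unfolding u_def using W1U[OF X] W3U[OF X] U0 by auto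
    have "sys_phi h g a d (n + m + n) p u
        = sys_phi h g a d n (sys_phi h g a d m (sys_phi h g a d n p u) (\<lambda>i. u (i + n))) (\<lambda>i. u (i + (n + m)))"
      by (simp only: phi_split[of h g a d "n + m" n] phi_split[of h g a d n m])
    also have "\<dots> = sys_phi h g a d n (sys_phi h g a d m (P1 X) (\<lambda>_. 0)) (\<lambda>_. W3 X)"
    proof -
      have "sys_phi h g a d n p u = P1 X" unfolding P1_def p by (rule phi_cong) (simp add: u_def)
      moreover have "sys_phi h g a d m Z (\<lambda>i. u (i + n)) = sys_phi h g a d m Z (\<lambda>_. 0)" for Z
        by (rule phi_cong) (simp add: u_def)
      moreover have "sys_phi h g a d n Z (\<lambda>i. u (i + (n + m))) = sys_phi h g a d n Z (\<lambda>_. W3 X)" for Z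
        by (rule phi_cong) (simp add: u_def)
      ultimately show ?thesis by simp
    qed
    also have "\<dots> = sys_phi h g a 1 n (X, snd (P1 X) + real m * a * (X - 1)) (\<lambda>_. W3 X)"
      using phi_zero[of h g a m "P1 X", OF assms(5,6)] fP1[OF X] d1 by simp
    also have "\<dots> = (fst (sys_phi h g a 1 n (X, snd (P1 X)) (\<lambda>_. W3 X)), Y X)"
    proof -
      have "P1 X = (X, snd (P1 X))" using fP1[OF X] by (metis prod.collapse)
      then have "T X = snd (sys_phi h g a 1 n (X, snd (P1 X)) (\<lambda>_. W3 X))"
        unfolding T_def d1 by metis
      then show ?thesis unfolding Y_def by (simp add: phi_shift)
    qed
    also have "\<dots> = q"
      using YX hW3[OF X] X Xlo0 unfolding q phi_fst_const by simp
    finally have "sys_phi h g a d (n + m + n) p u = q" .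
    moreover have "n + m + n \<ge> 1" using n0 by simp
    ultimately show "\<exists>k\<ge>1. \<exists>u. (\<forall>i. u i \<in> U) \<and> sys_phi h g a d k p u = q"
      using uU by blast
  qed
qed

end
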